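(* There is an absolute constant $C$ such that for all integers $1\le k<d$ and $n\ge1$ and every $B\in\mathbb R^{n\times d}$, there exist $k$ distinct standard basis vectors of $\mathbb R^d$ such that the matrix $P\in\mathbb R^{d\times k}$ having them as columns satisfies \[\|B-(BP)(BP)^\dagger B\|_F^2\le C\,kd\,\|B-[B]_k\|_F^2.\]
   Context: $M^\dagger$ denotes the Moore–Penrose pseudo-inverse, and $[B]_k$ denotes a best approximation of $B$ of rank at most $k$ in Frobenius norm. *)

theory Defs
  imports Complex_Main "Jordan_Normal_Form.DL_Rank"
begin

definition frob_sq :: "real mat \<Rightarrow> real" where
  "frob_sq A = (\<Sum>i<dim_row A. \<Sum>j<dim_col A. (A $$ (i, j))\<^sup>2)"

definition is_pinv :: "real mat \<Rightarrow> real mat \<Rightarrow> bool" where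
  "is_pinv M X \<longleftrightarrow> X \<in> carrier_mat (dim_col M) (dim_row M)
     \<and> M * X * M = M \<and> X * M * X = X
     \<and> transpose_mat (M * X) = M * X \<and> transpose_mat (X * M) = X * M"

definition pinv :: "real mat \<Rightarrow> real mat" where
  "pinv M = (THE X. is_pinv M X)"

definition mrank :: "real mat \<Rightarrow> nat" where
  "mrank A = vec_space.rank (dim_row A) A"

text \<open>Squared Frobenius error of a best rank-at-most-k approximation:
  the value of the minimisation problem defining [B]_k.\<close>
definition best_rank_err :: "real mat \<Rightarrow> nat \<Rightarrow> real" where
  "best_rank_err B k = Inf {frob_sq (B - A) | A.
      A \<in> carrier_mat (dim_row B) (dim_col B) \<and> mrank A \<le> k}"

end

theory Submission
  imports Defs
begin

lemma sq_sum_le_card: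
  fixes a :: "'b \<Rightarrow> real"
  assumes "finite S"
  shows "(\<Sum>l\<in>S. a l)\<^sup>2 \<le> real (card S) * (\<Sum>l\<in>S. (a l)\<^sup>2)"
proof -
  have "0 \<le> (\<Sum>l\<in>S. \<Sum>m\<in>S. (a l - a m)\<^sup>2)" by (intro sum_nonneg) auto
  also have "\<dots> = (\<Sum>l\<in>S. \<Sum>m\<in>S. (a l)\<^sup>2 + (a m)\<^sup>2 - 2 * (a l * a m))"
    by (simp add: power2_diff mult.assoc)
  also have "\<dots> = 2 * (real (card S) * (\<Sum>l\<in>S. (a l)\<^sup>2)) - 2 * (\<Sum>l\<in>S. a l)\<^sup>2"
    by (simp add: sum_subtractf sum.distrib sum_distrib_left sum_distrib_right power2_eq_square
        sum_constant algebra_simps)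
  finally show ?thesis by simp
qed

definition colsel :: "real mat \<Rightarrow> nat \<Rightarrow> (nat \<Rightarrow> nat) \<Rightarrow> real mat" where
  "colsel A r \<sigma> = mat (dim_row A) r (\<lambda>(i,l). A $$ (i, \<sigma> l))"

lemma colsel_carrier[simp]: "colsel A r \<sigma> \<in> carrier_mat (dim_row A) r"
  by (simp add: colsel_def)

lemma colsel_carrier': assumes "A \<in> carrier_mat n d" shows "colsel A r \<sigma> \<in> carrier_mat n r"
proof -
  have "dim_row A = n" using assms by (rule carrier_matD)
  thus ?thesis using colsel_carrier[of A r \<sigma>] by simp
qed

lemma colsel_index[simp]: "i < dim_row A \<Longrightarrow> l < r \<Longrightarrow> colsel A r \<sigma> $$ (i,l) = A $$ (i, \<sigma> l)"
  by (simp add: colsel_def)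

lemma colsel_dims[simp]: "dim_row (colsel A r \<sigma>) = dim_row A" "dim_col (colsel A r \<sigma>) = r"
  by (simp_all add: colsel_def)

lemma gram_ker:
  fixes F :: "real mat"
  assumes F: "F \<in> carrier_mat n r" and v: "v \<in> carrier_vec r"
    and z: "(transpose_mat F * F) *\<^sub>v v = 0\<^sub>v r"
  shows "F *\<^sub>v v = 0\<^sub>v n"
proof -
  define w where "w = F *\<^sub>v v"
  have w: "w \<in> carrier_vec n" using F v by (simp add: w_def)
  have "(transpose_mat F * F) *\<^sub>v v = transpose_mat F *\<^sub>v w"
    using F v by (simp add: w_def)
  hence z2: "transpose_mat F *\<^sub>v w = 0\<^sub>v r" using z by simp
  have "0 = (\<Sum>l<r. v $ l * (transpose_mat F *\<^sub>v w) $ l)" using z2 by simp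
  also have "\<dots> = (\<Sum>l<r. v $ l * (\<Sum>i<n. F $$ (i,l) * w $ i))"
    using F w by (intro sum.cong refl) (simp add: scalar_prod_def row_transpose lessThan_atLeast0)
  also have "\<dots> = (\<Sum>i<n. w $ i * (\<Sum>l<r. F $$ (i,l) * v $ l))"
    by (simp add: sum_distrib_left sum_distrib_right mult_ac sum.swap[of _ "{..<r}"])
  also have "\<dots> = (\<Sum>i<n. (w $ i)\<^sup>2)"
    using F v by (intro sum.cong refl) (simp add: w_def scalar_prod_def power2_eq_square lessThan_atLeast0)
  finally have "(\<Sum>i<n. (w $ i)\<^sup>2) = 0" by simp
  hence "\<forall>i\<in>{..<n}. (w $ i)\<^sup>2 = 0" by (subst sum_nonneg_eq_0_iff[symmetric]) auto
  thus ?thesis using w by (intro eq_vecI) (auto simp: w_def[symmetric])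
qed

lemma gram_det_ne0_iff:
  fixes F :: "real mat"
  assumes F: "F \<in> carrier_mat n r"
  shows "det (transpose_mat F * F) \<noteq> 0 \<longleftrightarrow> (\<forall>v\<in>carrier_vec r. F *\<^sub>v v = 0\<^sub>v n \<longrightarrow> v = 0\<^sub>v r)"
proof -
  have G: "transpose_mat F * F \<in> carrier_mat r r" using F by simp
  have e: "det (transpose_mat F * F) = 0 \<longleftrightarrow> (\<exists>v. v \<in> carrier_vec r \<and> v \<noteq> 0\<^sub>v r \<and> (transpose_mat F * F) *\<^sub>v v = 0\<^sub>v r)"
    by (rule det_0_iff_vec_prod_zero_field[OF G])
  show ?thesis
  proof
    assume d: "det (transpose_mat F * F) \<noteq> 0"
    show "\<forall>v\<in>carrier_vec r. F *\<^sub>v v = 0\<^sub>v n \<longrightarrow> v = 0\<^sub>v r"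
    proof (intro ballI impI)
      fix v assume v: "v \<in> carrier_vec r" and Fv: "F *\<^sub>v v = 0\<^sub>v n"
      have "transpose_mat F * F *\<^sub>v v = transpose_mat F *\<^sub>v (F *\<^sub>v v)" using F v by simp
      also have "\<dots> = 0\<^sub>v r" using F Fv by auto
      finally show "v = 0\<^sub>v r" using e d v by blast
    qed
  next
    assume h: "\<forall>v\<in>carrier_vec r. F *\<^sub>v v = 0\<^sub>v n \<longrightarrow> v = 0\<^sub>v r"
    show "det (transpose_mat F * F) \<noteq> 0"
      using e h gram_ker[OF F] by blast
  qed
qed

lemma mv_sum:
  fixes M :: "real mat"
  assumes "M \<in> carrier_mat n m" "v \<in> carrier_vec m" "i < n"
  shows "(M *\<^sub>v v) $ i = (\<Sum>l<m. M $$ (i,l) * v $ l)"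
  using assms by (simp add: scalar_prod_def lessThan_atLeast0)

lemma mm_sum:
  fixes M :: "real mat"
  assumes "M \<in> carrier_mat n m" "N \<in> carrier_mat m p" "i < n" "j < p"
  shows "(M * N) $$ (i,j) = (\<Sum>l<m. M $$ (i,l) * N $$ (l,j))"
  using assms by (simp add: scalar_prod_def lessThan_atLeast0)

lemma dep_step:
  fixes A :: "real mat"
  assumes A: "A \<in> carrier_mat n d"
    and d1: "det (transpose_mat (colsel A r \<sigma>) * colsel A r \<sigma>) \<noteq> 0"
    and d2: "det (transpose_mat (colsel A (Suc r) (\<sigma>(r:=j))) * colsel A (Suc r) (\<sigma>(r:=j))) = 0"
  shows "\<exists>c. \<forall>i<n. A $$ (i,j) = (\<Sum>l<r. A $$ (i, \<sigma> l) * c l)"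
proof -
  let ?F = "colsel A r \<sigma>" and ?F' = "colsel A (Suc r) (\<sigma>(r:=j))"
  have F: "?F \<in> carrier_mat n r" and F': "?F' \<in> carrier_mat n (Suc r)" using A by auto
  from d2 gram_det_ne0_iff[OF F'] obtain v where v: "v \<in> carrier_vec (Suc r)"
    and Fv: "?F' *\<^sub>v v = 0\<^sub>v n" and vne: "v \<noteq> 0\<^sub>v (Suc r)" by blast
  have eq: "(\<Sum>l<r. A $$ (i, \<sigma> l) * v $ l) + A $$ (i,j) * v $ r = 0" if i: "i < n" for i
  proof -
    have "0 = (?F' *\<^sub>v v) $ i" using Fv i by simp
    also have "\<dots> = (\<Sum>l<Suc r. ?F' $$ (i,l) * v $ l)" by (rule mv_sum[OF F' v i])
    also have "\<dots> = (\<Sum>l<r. A $$ (i, \<sigma> l) * v $ l) + A $$ (i,j) * v $ r"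
      using A i by (simp add: sum.lessThan_Suc)
    finally show ?thesis by simp
  qed
  show ?thesis
  proof (cases "v $ r = 0")
    case True
    define v' where "v' = vec r (\<lambda>l. v $ l)"
    have v': "v' \<in> carrier_vec r" by (simp add: v'_def)
    have "?F *\<^sub>v v' = 0\<^sub>v n"
    proof (rule eq_vecI)
      fix i assume "i < dim_vec (0\<^sub>v n)"
      hence i: "i < n" by simp
      have "(?F *\<^sub>v v') $ i = (\<Sum>l<r. ?F $$ (i,l) * v' $ l)" by (rule mv_sum[OF F v' i])
      also have "\<dots> = (\<Sum>l<r. A $$ (i, \<sigma> l) * v $ l)" using A i by (simp add: v'_def)
      also have "\<dots> = 0" using eq[OF i] True by simp
      finally show "(?F *\<^sub>v v') $ i = 0\<^sub>v n $ i" using i by simp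
    qed (use A in \<open>simp add: carrier_matD\<close>)
    hence "v' = 0\<^sub>v r" using d1 gram_det_ne0_iff[OF F] v' by blast
    hence "v = 0\<^sub>v (Suc r)"
    proof -
      assume h: "v' = 0\<^sub>v r"
      show ?thesis
      proof (rule eq_vecI)
        fix l assume "l < dim_vec (0\<^sub>v (Suc r))"
        hence "l < Suc r" by simp
        show "v $ l = 0\<^sub>v (Suc r) $ l"
        proof (cases "l < r")
          case True2: True
          have "v' $ l = 0" using h True2 by simp
          then show ?thesis using True2 \<open>l < Suc r\<close> by (simp add: v'_def)
        next
          case False
          with \<open>l < Suc r\<close> have "l = r" by simp
          then show ?thesis using True by simp
        qed
      qed (use v in simp)
    qed
    with vne show ?thesis by simp
  next
    case False
    show ?thesis
    proof (intro exI allI impI)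
      fix i assume i: "i < n"
      have "A $$ (i,j) * v $ r = - (\<Sum>l<r. A $$ (i, \<sigma> l) * v $ l)" using eq[OF i] by linarith
      hence "A $$ (i,j) = - (\<Sum>l<r. A $$ (i, \<sigma> l) * v $ l) / v $ r" using False
        by (simp add: field_simps)
      also have "\<dots> = (\<Sum>l<r. A $$ (i, \<sigma> l) * (- v $ l / v $ r))"
        by (simp add: sum_divide_distrib sum_negf[symmetric])
      finally show "A $$ (i,j) = (\<Sum>l<r. A $$ (i, \<sigma> l) * (- v $ l / v $ r))" .
    qed
  qed
qed

definition repl_mat :: "nat \<Rightarrow> nat \<Rightarrow> (nat \<Rightarrow> real) \<Rightarrow> real mat" where
  "repl_mat r i c = mat r r (\<lambda>(a,b). if b = i then c a else if a = b then 1 else 0)"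

lemma repl_mat_index[simp]: "a < r \<Longrightarrow> b < r \<Longrightarrow>
  repl_mat r i c $$ (a,b) = (if b = i then c a else if a = b then 1 else 0)"
  by (simp add: repl_mat_def)

lemma repl_mat_carrier[simp]: "repl_mat r i c \<in> carrier_mat r r"
  by (simp add: repl_mat_def)

lemma repl_mat_dims[simp]: "dim_row (repl_mat r i c) = r" "dim_col (repl_mat r i c) = r"
  by (simp_all add: repl_mat_def)

lemma det_repl_mat:
  assumes i: "i < r"
  shows "det (repl_mat r i c) = c i"
proof -
  let ?E = "repl_mat r i c"
  have E: "?E \<in> carrier_mat r r" by (simp add: repl_mat_def)
  have md: "mat_delete ?E i i = 1\<^sub>m (r - 1)"
    by (rule eq_matI) (auto simp: mat_delete_def repl_mat_def)
  have cf: "cofactor ?E i i = 1" by (simp add: cofactor_def md)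
  have "det ?E = (\<Sum>b<r. ?E $$ (i,b) * cofactor ?E i b)" by (rule laplace_expansion_row[OF E i])
  also have "\<dots> = (\<Sum>b<r. if b = i then c i else 0)"
    using i by (intro sum.cong refl) (auto simp: cf)
  also have "\<dots> = c i" using i by simp
  finally show ?thesis .
qed

lemma cramer_bound:
  fixes A :: "real mat"
  assumes A: "A \<in> carrier_mat n d" and i: "i < r"
    and mx: "\<bar>det (transpose_mat (colsel A r (\<sigma>(i:=j))) * colsel A r (\<sigma>(i:=j)))\<bar>
             \<le> \<bar>det (transpose_mat (colsel A r \<sigma>) * colsel A r \<sigma>)\<bar>"
    and d1: "det (transpose_mat (colsel A r \<sigma>) * colsel A r \<sigma>) \<noteq> 0"
    and rep: "\<forall>m<n. A $$ (m,j) = (\<Sum>l<r. A $$ (m, \<sigma> l) * c l)"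
  shows "\<bar>c i\<bar> \<le> 1"
proof -
  let ?F = "colsel A r \<sigma>" and ?E = "repl_mat r i c"
  have nA: "dim_row A = n" using A by (rule carrier_matD)
  have F: "?F \<in> carrier_mat n r" using A by (rule colsel_carrier')
  have E: "?E \<in> carrier_mat r r" by simp
  have FE: "colsel A r (\<sigma>(i:=j)) = ?F * ?E"
  proof (rule eq_matI)
    fix m b assume m: "m < dim_row (?F * ?E)" and b: "b < dim_col (?F * ?E)"
    hence m: "m < n" and b: "b < r" using F E by (auto dest: carrier_matD)
    have "(?F * ?E) $$ (m,b) = (\<Sum>a<r. ?F $$ (m,a) * ?E $$ (a,b))"
      by (rule mm_sum[OF F E m b])
    also have "\<dots> = (\<Sum>a<r. A $$ (m, \<sigma> a) * ?E $$ (a,b))" using nA m by simp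
    also have "\<dots> = colsel A r (\<sigma>(i:=j)) $$ (m,b)"
    proof (cases "b = i")
      case True
      have "(\<Sum>a<r. A $$ (m, \<sigma> a) * ?E $$ (a,b)) = (\<Sum>a<r. A $$ (m, \<sigma> a) * c a)"
        using True b by (intro sum.cong refl) simp
      also have "\<dots> = A $$ (m,j)" using rep m by simp
      also have "\<dots> = colsel A r (\<sigma>(i:=j)) $$ (m,b)" using nA m b True by simp
      finally show ?thesis .
    next
      case False
      have "(\<Sum>a<r. A $$ (m, \<sigma> a) * ?E $$ (a,b)) = (\<Sum>a<r. if a = b then A $$ (m, \<sigma> a) else 0)"
        using False b by (intro sum.cong refl) auto
      also have "\<dots> = A $$ (m, \<sigma> b)" using b by (simp add: sum.delta)
      finally show ?thesis using nA m b False by simp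
    qed
    finally show "colsel A r (\<sigma>(i:=j)) $$ (m,b) = (?F * ?E) $$ (m,b)" by simp
  next
    show "dim_row (colsel A r (\<sigma>(i:=j))) = dim_row (?F * ?E)" using nA by simp
  next
    show "dim_col (colsel A r (\<sigma>(i:=j))) = dim_col (?F * ?E)" by simp
  qed
  let ?G = "transpose_mat ?F * ?F"
  have G: "?G \<in> carrier_mat r r" using F by simp
  have "transpose_mat (?F * ?E) * (?F * ?E) = transpose_mat ?E * (?G * ?E)"
  proof -
    have Ft: "transpose_mat ?F \<in> carrier_mat r n" using F by simp
    have Et: "transpose_mat ?E \<in> carrier_mat r r" using E by simp
    have "transpose_mat (?F * ?E) * (?F * ?E) = (transpose_mat ?E * transpose_mat ?F) * (?F * ?E)"
      by (simp add: transpose_mult[OF F E])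
    also have "\<dots> = transpose_mat ?E * (transpose_mat ?F * (?F * ?E))"
      by (rule assoc_mult_mat[OF Et Ft mult_carrier_mat[OF F E]])
    also have "transpose_mat ?F * (?F * ?E) = ?G * ?E"
      by (rule assoc_mult_mat[OF Ft F E, symmetric])
    finally show ?thesis .
  qed
  hence "det (transpose_mat (colsel A r (\<sigma>(i:=j))) * colsel A r (\<sigma>(i:=j))) = det ?E * (det ?G * det ?E)"
  proof -
    have Et: "transpose_mat ?E \<in> carrier_mat r r" using E by simp
    have "det (transpose_mat ?E * (?G * ?E)) = det (transpose_mat ?E) * det (?G * ?E)"
      by (rule det_mult[OF Et mult_carrier_mat[OF G E]])
    also have "det (?G * ?E) = det ?G * det ?E" by (rule det_mult[OF G E])
    also have "det (transpose_mat ?E) = det ?E" by (rule det_transpose[OF E])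
    finally show ?thesis unfolding FE using \<open>transpose_mat (?F * ?E) * (?F * ?E) = _\<close> by simp
  qed
  hence "det (transpose_mat (colsel A r (\<sigma>(i:=j))) * colsel A r (\<sigma>(i:=j))) = (c i)\<^sup>2 * det ?G"
    using i by (simp add: det_repl_mat power2_eq_square)
  note eqx = this
  define g where "g = det ?G"
  define x where "x = det (transpose_mat (colsel A r (\<sigma>(i:=j))) * colsel A r (\<sigma>(i:=j)))"
  have eqx': "x = (c i)\<^sup>2 * g" using eqx unfolding x_def g_def .
  have mx': "\<bar>x\<bar> \<le> \<bar>g\<bar>" using mx unfolding x_def g_def .
  have g0: "g \<noteq> 0" using d1 unfolding g_def .
  have "\<bar>x\<bar> = (c i)\<^sup>2 * \<bar>g\<bar>" unfolding eqx' by (simp add: abs_mult)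
  hence h: "(c i)\<^sup>2 * \<bar>g\<bar> \<le> 1 * \<bar>g\<bar>" using mx' by simp
  have pos: "\<bar>g\<bar> > 0" using g0 by simp
  have "(c i)\<^sup>2 \<le> 1" using mult_right_le_imp_le[OF h pos] .
  thus ?thesis using abs_square_le_1 by blast
qed

abbreviation gd :: "real mat \<Rightarrow> nat \<Rightarrow> (nat \<Rightarrow> nat) \<Rightarrow> real" where
  "gd A r \<sigma> \<equiv> det (transpose_mat (colsel A r \<sigma>) * colsel A r \<sigma>)"

lemma gd_same_cols:
  fixes A :: "real mat"
  assumes A: "A \<in> carrier_mat n d" and ab: "a < r" "b < r" "a \<noteq> b"
    and eq: "\<forall>i<n. A $$ (i, \<sigma> a) = A $$ (i, \<sigma> b)"
  shows "gd A r \<sigma> = 0"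
proof -
  have nA: "dim_row A = n" using A by (rule carrier_matD)
  let ?F = "colsel A r \<sigma>"
  have F: "?F \<in> carrier_mat n r" using A by (rule colsel_carrier')
  define v :: "real vec" where "v = vec r (\<lambda>l. (if l = a then 1 else 0) - (if l = b then 1 else 0))"
  have v: "v \<in> carrier_vec r" by (simp add: v_def)
  have vne: "v \<noteq> 0\<^sub>v r"
  proof
    assume "v = 0\<^sub>v r"
    hence "v $ a = 0" using ab by simp
    thus False using ab by (simp add: v_def)
  qed
  have "?F *\<^sub>v v = 0\<^sub>v n"
  proof (rule eq_vecI)
    fix i assume "i < dim_vec (0\<^sub>v n)"
    hence i: "i < n" by simp
    have "(?F *\<^sub>v v) $ i = (\<Sum>l<r. ?F $$ (i,l) * v $ l)" by (rule mv_sum[OF F v i])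
    also have "\<dots> = (\<Sum>l<r. (if l = a then A $$ (i, \<sigma> l) else 0) - (if l = b then A $$ (i, \<sigma> l) else 0))"
      using nA i by (intro sum.cong refl) (simp add: v_def algebra_simps)
    also have "\<dots> = A $$ (i, \<sigma> a) - A $$ (i, \<sigma> b)"
      using ab by (simp add: sum_subtractf sum.delta)
    also have "\<dots> = 0" using eq i by simp
    finally show "(?F *\<^sub>v v) $ i = 0\<^sub>v n $ i" using i by simp
  qed (use nA in simp)
  thus ?thesis using gram_det_ne0_iff[OF F] v vne by blast
qed

lemma gd_inj:
  fixes A :: "real mat"
  assumes A: "A \<in> carrier_mat n d" and g: "gd A r \<sigma> \<noteq> 0"
  shows "inj_on \<sigma> {..<r}"
proof (rule inj_onI, rule ccontr)
  fix a b assume "a \<in> {..<r}" "b \<in> {..<r}" "\<sigma> a = \<sigma> b" "a \<noteq> b"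
  thus False using gd_same_cols[OF A, of a r b \<sigma>] g by auto
qed

lemma gd_rank:
  fixes A :: "real mat"
  assumes A: "A \<in> carrier_mat n d" and g: "gd A m \<sigma> \<noteq> 0" and sig: "\<sigma> ` {..<m} \<subseteq> {..<d}"
  shows "m \<le> vec_space.rank n A"
proof -
  have nA: "dim_row A = n" using A by (rule carrier_matD)
  let ?F = "colsel A m \<sigma>"
  have F: "?F \<in> carrier_mat n m" using A by (rule colsel_carrier')
  have colF: "col ?F l = col A (\<sigma> l)" if l: "l < m" for l
    by (rule eq_vecI) (use l nA in \<open>auto simp: col_def\<close>)
  have dist: "distinct (cols ?F)"
  proof (rule distinct_conv_nth[THEN iffD2], intro allI impI)
    fix a b assume a: "a < length (cols ?F)" and b: "b < length (cols ?F)" and ab: "a \<noteq> b"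
    hence a': "a < m" and b': "b < m" by auto
    show "cols ?F ! a \<noteq> cols ?F ! b"
    proof
      assume "cols ?F ! a = cols ?F ! b"
      hence "col ?F a = col ?F b" using a' b' by simp
      hence "\<forall>i<n. A $$ (i, \<sigma> a) = A $$ (i, \<sigma> b)"
        using a' b' nA by (metis colF col_def index_vec carrier_matD(1)[OF A] index_col)
      thus False using gd_same_cols[OF A a' b' ab] g by simp
    qed
  qed
  have indpt: "\<not> LinearCombinations.module.lin_dep class_ring (module_vec TYPE(real) n) (set (cols ?F))"
  proof
    assume "LinearCombinations.module.lin_dep class_ring (module_vec TYPE(real) n) (set (cols ?F))"
    then obtain v where "v \<in> carrier_vec m" "v \<noteq> 0\<^sub>v m" "?F *\<^sub>v v = 0\<^sub>v n"
      using vec_space.lin_depE[OF F _ dist] by blast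
    thus False using gram_det_ne0_iff[OF F] g by blast
  qed
  have sub: "set (cols ?F) \<subseteq> set (cols A)"
  proof
    fix x assume "x \<in> set (cols ?F)"
    then obtain l where l: "l < m" and x: "x = col ?F l" by (auto simp: in_set_conv_nth)
    have "\<sigma> l < d" using sig l by auto
    hence "col A (\<sigma> l) \<in> set (cols A)" using A by (auto simp: in_set_conv_nth carrier_matD intro!: exI[of _ "\<sigma> l"])
    thus "x \<in> set (cols A)" using x colF[OF l] by simp
  qed
  have "card (set (cols ?F)) \<le> vec_space.rank n A"
    by (rule vec_space.rank_ge_card_indpt[OF A sub indpt])
  moreover have "card (set (cols ?F)) = m" using distinct_card[OF dist] by simp
  ultimately show ?thesis by simp
qed

lemma span_select:
  fixes A :: "real mat"
  assumes A: "A \<in> carrier_mat n d" and rk: "vec_space.rank n A \<le> k"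
  shows "\<exists>r \<sigma> c. r \<le> k \<and> \<sigma> ` {..<r} \<subseteq> {..<d} \<and> inj_on \<sigma> {..<r} \<and> gd A r \<sigma> \<noteq> 0 \<and>
     (\<forall>j<d. \<forall>l<r. \<bar>c j l\<bar> \<le> (1::real)) \<and>
     (\<forall>i<n. \<forall>j<d. A $$ (i,j) = (\<Sum>l<r. A $$ (i, \<sigma> l) * c j l))"
proof -
  obtain G where G: "G = (\<lambda>r \<sigma>. gd A r \<sigma>)" by blast
  define R where "R = {r. r \<le> k \<and> (\<exists>\<sigma>\<in>PiE {..<r} (\<lambda>_. {..<d}). G r \<sigma> \<noteq> 0)}"
  have finR: "finite R" unfolding R_def by (rule finite_subset[of _ "{..k}"]) auto
  have g0: "G 0 (\<lambda>_. undefined) \<noteq> 0"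
  proof -
    have "transpose_mat (colsel A 0 (\<lambda>_. undefined)) * colsel A 0 (\<lambda>_. undefined) \<in> carrier_mat 0 0"
      using colsel_carrier[of A 0 "\<lambda>_. undefined"] by (intro mult_carrier_mat) auto
    thus ?thesis unfolding G by (subst det_dim_zero) auto
  qed
  have "0 \<in> R" unfolding R_def using g0 by (intro CollectI conjI bexI[of _ "\<lambda>_. undefined"]) auto
  define r where "r = Max R"
  have rR: "r \<in> R" unfolding r_def using finR \<open>0 \<in> R\<close> by (intro Max_in) auto
  have rmax: "\<And>r'. r' \<in> R \<Longrightarrow> r' \<le> r" unfolding r_def using finR by simp
  have rk': "r \<le> k" using rR unfolding R_def by simp
  define S where "S = {\<sigma> \<in> PiE {..<r} (\<lambda>_. {..<d}). G r \<sigma> \<noteq> 0}"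
  have "S \<subseteq> PiE {..<r} (\<lambda>_. {..<d})" unfolding S_def by blast
  moreover have "finite (PiE {..<r} (\<lambda>_. {..<d}))" by (intro finite_PiE) auto
  ultimately have finS: "finite S" by (rule finite_subset)
  have Sne: "S \<noteq> {}" using rR unfolding R_def S_def by auto
  obtain \<sigma> where sS: "\<sigma> \<in> S" and smax: "\<And>\<tau>. \<tau> \<in> S \<Longrightarrow> \<bar>G r \<tau>\<bar> \<le> \<bar>G r \<sigma>\<bar>"
  proof -
    let ?m = "Max ((\<lambda>\<tau>. \<bar>G r \<tau>\<bar>) ` S)"
    have "?m \<in> (\<lambda>\<tau>. \<bar>G r \<tau>\<bar>) ` S" using finS Sne by (intro Max_in) auto
    then obtain \<sigma> where "\<sigma> \<in> S" "\<bar>G r \<sigma>\<bar> = ?m" by auto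
    moreover have "\<And>\<tau>. \<tau> \<in> S \<Longrightarrow> \<bar>G r \<tau>\<bar> \<le> ?m" using finS by simp
    ultimately show ?thesis using that by metis
  qed
  have sP: "\<sigma> \<in> PiE {..<r} (\<lambda>_. {..<d})" and g: "G r \<sigma> \<noteq> 0" using sS unfolding S_def by auto
  have smax': "\<bar>G r \<tau>\<bar> \<le> \<bar>G r \<sigma>\<bar>" if "\<tau> \<in> PiE {..<r} (\<lambda>_. {..<d})" for \<tau>
    using smax[of \<tau>] that unfolding S_def by (cases "G r \<tau> = 0") auto
  have sig: "\<sigma> ` {..<r} \<subseteq> {..<d}" using sP by (auto simp: PiE_def Pi_def)
  have g': "gd A r \<sigma> \<noteq> 0" using g unfolding G .
  have dep: "\<exists>c. \<forall>i<n. A $$ (i,j) = (\<Sum>l<r. A $$ (i, \<sigma> l) * c l)" if j: "j < d" for j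
  proof (rule dep_step[OF A g'])
    let ?s = "\<sigma>(r:=j)"
    have sP': "?s \<in> PiE {..<Suc r} (\<lambda>_. {..<d})" using sP j
      by (auto simp: PiE_def Pi_def extensional_def)
    show "gd A (Suc r) ?s = 0"
    proof (rule ccontr)
      assume h: "gd A (Suc r) ?s \<noteq> 0"
      have "?s ` {..<Suc r} \<subseteq> {..<d}" using sP' by (auto simp: PiE_def Pi_def)
      hence "Suc r \<le> vec_space.rank n A" by (rule gd_rank[OF A h])
      moreover have "G (Suc r) ?s \<noteq> 0" using h unfolding G .
      ultimately have "Suc r \<in> R" using rk sP' unfolding R_def by auto
      thus False using rmax by fastforce
    qed
  qed
  define c where "c = (\<lambda>j. SOME c. \<forall>i<n. A $$ (i,j) = (\<Sum>l<r. A $$ (i, \<sigma> l) * c l))"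
  have crep: "\<forall>i<n. A $$ (i,j) = (\<Sum>l<r. A $$ (i, \<sigma> l) * c j l)" if j: "j < d" for j
    unfolding c_def using someI_ex[OF dep[OF j]] .
  have cb: "\<bar>c j l\<bar> \<le> 1" if j: "j < d" and l: "l < r" for j l
  proof (rule cramer_bound[OF A l _ g' crep[OF j]])
    have "\<sigma>(l:=j) \<in> PiE {..<r} (\<lambda>_. {..<d})" using sP j l
      by (auto simp: PiE_def Pi_def extensional_def)
    from smax'[OF this] show "\<bar>gd A r (\<sigma>(l:=j))\<bar> \<le> \<bar>gd A r \<sigma>\<bar>" unfolding G .
  qed
  show ?thesis
    apply (rule exI[of _ r], rule exI[of _ \<sigma>], rule exI[of _ c])
    using rk' sig gd_inj[OF A g'] g' cb crep by blast
qed

lemma pinv_unique: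
  fixes M :: "real mat"
  assumes M: "M \<in> carrier_mat n m" and X: "is_pinv M X" and Y: "is_pinv M Y"
  shows "X = Y"
proof -
  have Xc: "X \<in> carrier_mat m n" using X M unfolding is_pinv_def by auto
  have Yc: "Y \<in> carrier_mat m n" using Y M unfolding is_pinv_def by auto
  have X1: "M * X * M = M" and X2: "X * M * X = X" and X3: "transpose_mat (M * X) = M * X"
    and X4: "transpose_mat (X * M) = X * M" using X unfolding is_pinv_def by auto
  have Y1: "M * Y * M = M" and Y2: "Y * M * Y = Y" and Y3: "transpose_mat (M * Y) = M * Y"
    and Y4: "transpose_mat (Y * M) = Y * M" using Y unfolding is_pinv_def by auto
  have Mt: "transpose_mat M \<in> carrier_mat m n" using M by simp
  have Xt: "transpose_mat X \<in> carrier_mat n m" using Xc by simp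
  have Yt: "transpose_mat Y \<in> carrier_mat n m" using Yc by simp
  have tMX: "transpose_mat (M * X) = transpose_mat X * transpose_mat M" by (rule transpose_mult[OF M Xc])
  have tXM: "transpose_mat (X * M) = transpose_mat M * transpose_mat X" by (rule transpose_mult[OF Xc M])
  have tMY: "transpose_mat (M * Y) = transpose_mat Y * transpose_mat M" by (rule transpose_mult[OF M Yc])
  have tYM: "transpose_mat (Y * M) = transpose_mat M * transpose_mat Y" by (rule transpose_mult[OF Yc M])
  have e1: "transpose_mat M = transpose_mat M * (M * Y)"
  proof -
    have "transpose_mat M = transpose_mat (M * Y * M)" using Y1 by simp
    also have "\<dots> = transpose_mat M * transpose_mat (M * Y)"
      by (rule transpose_mult[OF mult_carrier_mat[OF M Yc] M])
    finally show ?thesis using Y3 by simp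
  qed
  have e2: "transpose_mat M = (X * M) * transpose_mat M"
  proof -
    have "transpose_mat M = transpose_mat (M * (X * M))" using X1 M Xc by simp
    also have "\<dots> = transpose_mat (X * M) * transpose_mat M"
      by (rule transpose_mult[OF M mult_carrier_mat[OF Xc M]])
    finally show ?thesis using X4 by simp
  qed
  have "X = X * (M * X)" using X2 M Xc by simp
  also have "\<dots> = X * (transpose_mat X * transpose_mat M)" using X3 tMX by simp
  also have "\<dots> = X * (transpose_mat X * (transpose_mat M * (M * Y)))" using e1 by simp
  also have "\<dots> = X * ((transpose_mat X * transpose_mat M) * (M * Y))"
    using assoc_mult_mat[OF Xt Mt mult_carrier_mat[OF M Yc]] by simp
  also have "\<dots> = X * ((M * X) * (M * Y))" using X3 tMX by simp
  also have "\<dots> = (X * M * X) * (M * Y)"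
    using assoc_mult_mat[OF Xc mult_carrier_mat[OF M Xc] mult_carrier_mat[OF M Yc]]
      assoc_mult_mat[OF Xc M Xc] by simp
  also have "\<dots> = X * (M * Y)" using X2 by simp
  finally have xe: "X = X * (M * Y)" .
  have "Y = (Y * M) * Y" using Y2 by simp
  also have "\<dots> = (transpose_mat M * transpose_mat Y) * Y" using Y4 tYM by simp
  also have "\<dots> = (((X * M) * transpose_mat M) * transpose_mat Y) * Y" using e2 by simp
  also have "\<dots> = (X * M) * ((transpose_mat M * transpose_mat Y) * Y)"
  proof -
    have P: "X * M \<in> carrier_mat m m" using Xc M by simp
    have PM: "X * M * transpose_mat M \<in> carrier_mat m n" using P Mt by simp
    have "((X * M) * transpose_mat M * transpose_mat Y) * Y = (X * M * transpose_mat M) * (transpose_mat Y * Y)"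
      by (rule assoc_mult_mat[OF PM Yt Yc])
    also have "\<dots> = (X * M) * (transpose_mat M * (transpose_mat Y * Y))"
      by (rule assoc_mult_mat[OF P Mt mult_carrier_mat[OF Yt Yc]])
    also have "transpose_mat M * (transpose_mat Y * Y) = (transpose_mat M * transpose_mat Y) * Y"
      by (rule assoc_mult_mat[OF Mt Yt Yc, symmetric])
    finally show ?thesis .
  qed
  also have "\<dots> = (X * M) * ((Y * M) * Y)" using Y4 tYM by simp
  also have "\<dots> = (X * M) * Y" using Y2 by simp
  also have "\<dots> = X * (M * Y)" using Xc M Yc by simp
  finally have ye: "Y = X * (M * Y)" .
  show ?thesis using xe ye by simp
qed

lemma inv_exists:
  fixes S :: "real mat"
  assumes S: "S \<in> carrier_mat r r" and d: "det S \<noteq> 0"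
  shows "\<exists>W. W \<in> carrier_mat r r \<and> S * W = 1\<^sub>m r \<and> W * S = 1\<^sub>m r"
proof -
  have "S \<in> Units (ring_mat TYPE(real) r ())" by (rule det_non_zero_imp_unit[OF S d])
  thus ?thesis unfolding Units_def ring_mat_def by auto
qed

lemma inv_sym:
  fixes S W :: "real mat"
  assumes S: "S \<in> carrier_mat r r" and W: "W \<in> carrier_mat r r"
    and SW: "S * W = 1\<^sub>m r" and WS: "W * S = 1\<^sub>m r" and sym: "transpose_mat S = S"
  shows "transpose_mat W = W"
proof -
  have Wt: "transpose_mat W \<in> carrier_mat r r" using W by simp
  have "transpose_mat W = transpose_mat W * (S * W)" using SW Wt by simp
  also have "\<dots> = (transpose_mat W * S) * W" using assoc_mult_mat[OF Wt S W] by simp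
  also have "transpose_mat W * S = transpose_mat (S * W)"
    using transpose_mult[OF S W] sym by simp
  also have "\<dots> = 1\<^sub>m r" using SW by simp
  finally show ?thesis using W by simp
qed

lemma pinv_exists:
  fixes M :: "real mat"
  assumes M: "M \<in> carrier_mat n m"
  shows "\<exists>X. is_pinv M X"
proof -
  have rk: "vec_space.rank n M \<le> m" by (rule vec_space.rank_le_nc[OF M])
  obtain r \<sigma> c where sig: "\<sigma> ` {..<r} \<subseteq> {..<m}" and g: "gd M r \<sigma> \<noteq> 0"
    and rep: "\<forall>i<n. \<forall>j<m. M $$ (i,j) = (\<Sum>l<r. M $$ (i, \<sigma> l) * c j l)"
    using span_select[OF M rk] by blast
  have nM: "dim_row M = n" using M by (rule carrier_matD)
  define F where "F = colsel M r \<sigma>"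
  have F: "F \<in> carrier_mat n r" unfolding F_def using M by (rule colsel_carrier')
  have Ft: "transpose_mat F \<in> carrier_mat r n" using F by simp
  define C where "C = mat r m (\<lambda>(l,j). c j l)"
  have C: "C \<in> carrier_mat r m" by (simp add: C_def)
  have MFC: "M = F * C"
  proof (rule eq_matI)
    fix i j assume i: "i < dim_row (F * C)" and j: "j < dim_col (F * C)"
    hence i: "i < n" and j: "j < m" using F C by auto
    have "(F * C) $$ (i,j) = (\<Sum>l<r. F $$ (i,l) * C $$ (l,j))" by (rule mm_sum[OF F C i j])
    also have "\<dots> = (\<Sum>l<r. M $$ (i, \<sigma> l) * c j l)" using nM i j by (simp add: F_def C_def)
    also have "\<dots> = M $$ (i,j)" using rep i j by simp
    finally show "M $$ (i,j) = (F * C) $$ (i,j)" by simp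
  qed (use M F C in auto)
  define P where "P = mat m r (\<lambda>(j,l). if j = \<sigma> l then 1 else (0::real))"
  have P: "P \<in> carrier_mat m r" by (simp add: P_def)
  have MP: "M * P = F"
  proof (rule eq_matI)
    fix i l assume i: "i < dim_row F" and l: "l < dim_col F"
    hence i: "i < n" and l: "l < r" using F by auto
    have sl: "\<sigma> l < m" using sig l by auto
    have "(M * P) $$ (i,l) = (\<Sum>j<m. M $$ (i,j) * P $$ (j,l))" by (rule mm_sum[OF M P i l])
    also have "\<dots> = (\<Sum>j<m. if j = \<sigma> l then M $$ (i,j) else 0)"
      using l by (intro sum.cong refl) (simp add: P_def)
    also have "\<dots> = M $$ (i, \<sigma> l)" using sl by (simp add: sum.delta)
    finally show "(M * P) $$ (i,l) = F $$ (i,l)" using nM i l by (simp add: F_def)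
  qed (use M F P in auto)
  define S where "S = transpose_mat F * F"
  have S: "S \<in> carrier_mat r r" unfolding S_def using F by simp
  have Ssym: "transpose_mat S = S" unfolding S_def using transpose_mult[OF Ft F] by simp
  obtain W where W: "W \<in> carrier_mat r r" and SW: "S * W = 1\<^sub>m r" and WS: "W * S = 1\<^sub>m r"
    using inv_exists[OF S] g unfolding S_def F_def by blast
  have Wsym: "transpose_mat W = W" by (rule inv_sym[OF S W SW WS Ssym])
  define G where "G = W * (transpose_mat F * M)"
  have G: "G \<in> carrier_mat r m" unfolding G_def using W Ft M by simp
  have Gt: "transpose_mat G \<in> carrier_mat m r" using G by simp
  have FG: "F * G = M"
  proof -
    have "F * G = F * (W * (transpose_mat F * (F * C)))" unfolding G_def MFC ..
    also have "transpose_mat F * (F * C) = S * C" unfolding S_def using assoc_mult_mat[OF Ft F C] by simp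
    also have "W * (S * C) = (W * S) * C" using assoc_mult_mat[OF W S C] by simp
    also have "\<dots> = C" using WS C by simp
    finally show ?thesis using MFC by simp
  qed
  have GP: "G * P = 1\<^sub>m r"
  proof -
    have "G * P = W * ((transpose_mat F * M) * P)" unfolding G_def
      using assoc_mult_mat[OF W mult_carrier_mat[OF Ft M] P] by simp
    also have "(transpose_mat F * M) * P = transpose_mat F * F" using assoc_mult_mat[OF Ft M P] MP by simp
    finally show ?thesis using WS unfolding S_def by simp
  qed
  define T where "T = G * transpose_mat G"
  have T: "T \<in> carrier_mat r r" unfolding T_def using G by simp
  have Tsym: "transpose_mat T = T" unfolding T_def using transpose_mult[OF G Gt] by simp
  have "det T \<noteq> 0"
  proof -
    have "det (transpose_mat (transpose_mat G) * transpose_mat G) \<noteq> 0"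
    proof (rule gram_det_ne0_iff[OF Gt, THEN iffD2], intro ballI impI)
      fix v assume v: "v \<in> carrier_vec r" and z: "transpose_mat G *\<^sub>v v = 0\<^sub>v m"
      have Pt: "transpose_mat P \<in> carrier_mat r m" using P by simp
      have "v = transpose_mat (G * P) *\<^sub>v v" using GP v by simp
      also have "\<dots> = (transpose_mat P * transpose_mat G) *\<^sub>v v" using transpose_mult[OF G P] by simp
      also have "\<dots> = transpose_mat P *\<^sub>v (transpose_mat G *\<^sub>v v)" using Pt Gt v by simp
      also have "\<dots> = 0\<^sub>v r" using z Pt by auto
      finally show "v = 0\<^sub>v r" .
    qed
    thus ?thesis unfolding T_def by simp
  qed
  then obtain V where V: "V \<in> carrier_mat r r" and TV: "T * V = 1\<^sub>m r" and VT: "V * T = 1\<^sub>m r"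
    using inv_exists[OF T] by blast
  have Vsym: "transpose_mat V = V" by (rule inv_sym[OF T V TV VT Tsym])
  define X where "X = transpose_mat G * (V * (W * transpose_mat F))"
  have WF: "W * transpose_mat F \<in> carrier_mat r n" using W Ft by simp
  have VWF: "V * (W * transpose_mat F) \<in> carrier_mat r n" using V WF by simp
  have X: "X \<in> carrier_mat m n" unfolding X_def using Gt VWF by simp
  have MX: "M * X = F * (W * transpose_mat F)"
  proof -
    have "M * X = F * (G * X)" unfolding FG[symmetric] using assoc_mult_mat[OF F G X] by simp
    also have "G * X = (G * transpose_mat G) * (V * (W * transpose_mat F))"
      unfolding X_def using assoc_mult_mat[OF G Gt VWF] by simp
    also have "\<dots> = (T * V) * (W * transpose_mat F)"
      unfolding T_def[symmetric] using assoc_mult_mat[OF T V WF] by simp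
    also have "\<dots> = W * transpose_mat F" using TV left_mult_one_mat[OF WF] by simp
    finally show ?thesis .
  qed
  have XM: "X * M = transpose_mat G * (V * G)"
  proof -
    have "X * M = transpose_mat G * ((V * (W * transpose_mat F)) * (F * G))"
      unfolding X_def FG[symmetric] using assoc_mult_mat[OF Gt VWF mult_carrier_mat[OF F G]] by simp
    also have "(V * (W * transpose_mat F)) * (F * G) = V * ((W * transpose_mat F) * (F * G))"
      using assoc_mult_mat[OF V WF mult_carrier_mat[OF F G]] by simp
    also have "(W * transpose_mat F) * (F * G) = W * (transpose_mat F * (F * G))"
      using assoc_mult_mat[OF W Ft mult_carrier_mat[OF F G]] by simp
    also have "transpose_mat F * (F * G) = S * G" unfolding S_def using assoc_mult_mat[OF Ft F G] by simp
    also have "W * (S * G) = G" using assoc_mult_mat[OF W S G] WS G by simp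
    finally show ?thesis .
  qed
  have p1: "M * X * M = M"
  proof -
    have "M * X * M = (F * (W * transpose_mat F)) * (F * G)" using MX FG by simp
    also have "\<dots> = F * ((W * transpose_mat F) * (F * G))"
      using assoc_mult_mat[OF F WF mult_carrier_mat[OF F G]] by simp
    also have "(W * transpose_mat F) * (F * G) = W * (transpose_mat F * (F * G))"
      using assoc_mult_mat[OF W Ft mult_carrier_mat[OF F G]] by simp
    also have "transpose_mat F * (F * G) = S * G" unfolding S_def using assoc_mult_mat[OF Ft F G] by simp
    also have "W * (S * G) = G" using assoc_mult_mat[OF W S G] WS G by simp
    finally show ?thesis using FG by simp
  qed
  have p2: "X * M * X = X"
  proof -
    have "X * M * X = transpose_mat G * ((V * G) * X)"
      unfolding XM using assoc_mult_mat[OF Gt mult_carrier_mat[OF V G] X] by simp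
    also have "(V * G) * X = V * (G * X)" using assoc_mult_mat[OF V G X] by simp
    also have "G * X = (G * transpose_mat G) * (V * (W * transpose_mat F))"
      unfolding X_def using assoc_mult_mat[OF G Gt VWF] by simp
    also have "\<dots> = (T * V) * (W * transpose_mat F)"
      unfolding T_def[symmetric] using assoc_mult_mat[OF T V WF] by simp
    also have "\<dots> = W * transpose_mat F" using TV left_mult_one_mat[OF WF] by simp
    finally show ?thesis unfolding X_def .
  qed
  have p3: "transpose_mat (M * X) = M * X"
  proof -
    have "transpose_mat (F * (W * transpose_mat F)) = transpose_mat (W * transpose_mat F) * transpose_mat F"
      by (rule transpose_mult[OF F WF])
    also have "transpose_mat (W * transpose_mat F) = F * W" using transpose_mult[OF W Ft] Wsym by simp
    also have "(F * W) * transpose_mat F = F * (W * transpose_mat F)" using assoc_mult_mat[OF F W Ft] .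
    finally show ?thesis unfolding MX .
  qed
  have p4: "transpose_mat (X * M) = X * M"
  proof -
    have VG: "V * G \<in> carrier_mat r m" using V G by simp
    have "transpose_mat (transpose_mat G * (V * G)) = transpose_mat (V * G) * G"
      using transpose_mult[OF Gt VG] by simp
    also have "transpose_mat (V * G) = transpose_mat G * V" using transpose_mult[OF V G] Vsym by simp
    also have "(transpose_mat G * V) * G = transpose_mat G * (V * G)" using assoc_mult_mat[OF Gt V G] .
    finally show ?thesis unfolding XM .
  qed
  have "is_pinv M X" unfolding is_pinv_def using X M p1 p2 p3 p4 by auto
  thus ?thesis ..
qed

lemma pinv_prop:
  fixes M :: "real mat"
  assumes M: "M \<in> carrier_mat n m"
  shows "is_pinv M (pinv M)"
proof -
  obtain X where X: "is_pinv M X" using pinv_exists[OF M] by blast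
  have "\<exists>!X. is_pinv M X" using X pinv_unique[OF M] by blast
  thus ?thesis unfolding pinv_def by (rule theI')
qed

lemma proj_bound:
  fixes M B Y :: "real mat"
  assumes M: "M \<in> carrier_mat n k" and B: "B \<in> carrier_mat n d" and Y: "Y \<in> carrier_mat k d"
  shows "frob_sq (B - M * pinv M * B) \<le> frob_sq (B - M * Y)"
proof -
  let ?X = "pinv M"
  have P: "is_pinv M ?X" by (rule pinv_prop[OF M])
  have X: "?X \<in> carrier_mat k n" using P M unfolding is_pinv_def by auto
  have MXM: "M * ?X * M = M" and Hs: "transpose_mat (M * ?X) = M * ?X" using P unfolding is_pinv_def by auto
  define H where "H = M * ?X"
  have H: "H \<in> carrier_mat n n" unfolding H_def using M X by simp
  have Bt: "transpose_mat B \<in> carrier_mat d n" using B by simp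
  have orth: "transpose_mat (H * B) * (M * W) = transpose_mat B * (M * W)" if W: "W \<in> carrier_mat k d" for W
  proof -
    have MW: "M * W \<in> carrier_mat n d" using M W by simp
    have "transpose_mat (H * B) * (M * W) = (transpose_mat B * H) * (M * W)"
      using transpose_mult[OF H B] Hs unfolding H_def by simp
    also have "\<dots> = transpose_mat B * (H * (M * W))" by (rule assoc_mult_mat[OF Bt H MW])
    also have "H * (M * W) = (H * M) * W" by (rule assoc_mult_mat[OF H M W, symmetric])
    also have "H * M = M" using MXM unfolding H_def .
    finally show ?thesis .
  qed
  have XB: "?X * B \<in> carrier_mat k d" using X B by simp
  have HB: "H * B = M * (?X * B)" unfolding H_def by (rule assoc_mult_mat[OF M X B])
  have HBc: "H * B \<in> carrier_mat n d" using H B by simp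
  have MY: "M * Y \<in> carrier_mat n d" using M Y by simp
  define U where "U = (\<lambda>i j. B $$ (i,j) - (H * B) $$ (i,j))"
  define V where "V = (\<lambda>i j. (H * B) $$ (i,j) - (M * Y) $$ (i,j))"
  have inner: "(\<Sum>i<n. U i j * V i j) = 0" if j: "j < d" for j
  proof -
    have ent: "(transpose_mat C * D) $$ (j,j) = (\<Sum>i<n. C $$ (i,j) * D $$ (i,j))"
      if C: "C \<in> carrier_mat n d" and D: "D \<in> carrier_mat n d" for C D :: "real mat"
    proof -
      have Ct: "transpose_mat C \<in> carrier_mat d n" using C by simp
      show ?thesis using mm_sum[OF Ct D j j] C j by simp
    qed
    have e1: "(\<Sum>i<n. (H * B) $$ (i,j) * (H * B) $$ (i,j)) = (\<Sum>i<n. B $$ (i,j) * (H * B) $$ (i,j))"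
      using orth[OF XB] ent[OF HBc HBc] ent[OF B HBc] HB by simp
    have e2: "(\<Sum>i<n. (H * B) $$ (i,j) * (M * Y) $$ (i,j)) = (\<Sum>i<n. B $$ (i,j) * (M * Y) $$ (i,j))"
      using orth[OF Y] ent[OF HBc MY] ent[OF B MY] by simp
    have "(\<Sum>i<n. U i j * V i j) = (\<Sum>i<n. (B $$ (i,j) * (H * B) $$ (i,j) - B $$ (i,j) * (M * Y) $$ (i,j))
        - ((H * B) $$ (i,j) * (H * B) $$ (i,j) - (H * B) $$ (i,j) * (M * Y) $$ (i,j)))"
      unfolding U_def V_def by (intro sum.cong refl) (simp add: algebra_simps)
    also have "\<dots> = (\<Sum>i<n. B $$ (i,j) * (H * B) $$ (i,j)) - (\<Sum>i<n. B $$ (i,j) * (M * Y) $$ (i,j))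
        - ((\<Sum>i<n. (H * B) $$ (i,j) * (H * B) $$ (i,j)) - (\<Sum>i<n. (H * B) $$ (i,j) * (M * Y) $$ (i,j)))"
      by (simp only: sum_subtractf)
    also have "\<dots> = 0" using e1 e2 by simp
    finally show ?thesis .
  qed
  have dB: "dim_row B = n" "dim_col B = d" using B by auto
  have dMY: "dim_row (M * Y) = n" "dim_col (M * Y) = d" using MY by auto
  have MXB: "M * pinv M * B = H * B" unfolding H_def ..
  have "frob_sq (B - M * pinv M * B) = (\<Sum>i<n. \<Sum>j<d. ((B - H * B) $$ (i,j))\<^sup>2)"
    unfolding frob_sq_def MXB using HBc by (simp only: index_minus_mat(2,3) carrier_matD)
  also have "\<dots> = (\<Sum>i<n. \<Sum>j<d. (U i j)\<^sup>2)"
  proof (intro sum.cong refl)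
    fix i j assume "i \<in> {..<n}" "j \<in> {..<d}"
    hence "i < dim_row (H * B)" "j < dim_col (H * B)" using HBc by auto
    thus "((B - H * B) $$ (i,j))\<^sup>2 = (U i j)\<^sup>2" unfolding U_def by (simp only: index_minus_mat(1))
  qed
  also have "\<dots> \<le> (\<Sum>i<n. \<Sum>j<d. (U i j)\<^sup>2 + (V i j)\<^sup>2 + 2 * (U i j * V i j))"
  proof -
    have "(\<Sum>i<n. \<Sum>j<d. (U i j)\<^sup>2 + (V i j)\<^sup>2 + 2 * (U i j * V i j))
        = (\<Sum>i<n. \<Sum>j<d. (U i j)\<^sup>2) + (\<Sum>i<n. \<Sum>j<d. (V i j)\<^sup>2) + 2 * (\<Sum>i<n. \<Sum>j<d. U i j * V i j)"
      by (simp only: sum.distrib sum_distrib_left)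
    also have "(\<Sum>i<n. \<Sum>j<d. U i j * V i j) = (\<Sum>j<d. \<Sum>i<n. U i j * V i j)"
      by (rule sum.swap)
    also have "(\<Sum>j<d. \<Sum>i<n. U i j * V i j) = 0" using inner by simp
    finally show ?thesis by (simp add: sum_nonneg)
  qed
  also have "\<dots> = frob_sq (B - M * Y)"
    unfolding frob_sq_def
  proof (simp only: dMY index_minus_mat(2,3), intro sum.cong refl)
    fix i j assume i: "i \<in> {..<n}" and j: "j \<in> {..<d}"
    have e: "(B - M * Y) $$ (i,j) = U i j + V i j" using i j dMY unfolding U_def V_def by simp
    show "(U i j)\<^sup>2 + (V i j)\<^sup>2 + 2 * (U i j * V i j) = ((B - M * Y) $$ (i,j))\<^sup>2"
      unfolding e by (simp add: power2_sum)
  qed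
  finally show ?thesis .
qed

lemma sq_diff_le: "(x - y)\<^sup>2 \<le> 2 * x\<^sup>2 + 2 * (y::real)\<^sup>2"
proof -
  have "2 * x\<^sup>2 + 2 * y\<^sup>2 - (x - y)\<^sup>2 = (x + y)\<^sup>2" by (simp add: power2_eq_square algebra_simps)
  moreover have "0 \<le> (x + y)\<^sup>2" by simp
  ultimately show ?thesis by linarith
qed

definition selP :: "nat \<Rightarrow> nat \<Rightarrow> (nat \<Rightarrow> nat) \<Rightarrow> real mat" where
  "selP d k s = mat d k (\<lambda>(m,l). if m = s l then 1 else 0)"

lemma selP_carrier: "selP d k s \<in> carrier_mat d k" by (simp add: selP_def)

lemma BP_index:
  fixes B :: "real mat"
  assumes B: "B \<in> carrier_mat n d" and i: "i < n" and l: "l < k" and sl: "s l < d"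
  shows "(B * selP d k s) $$ (i,l) = B $$ (i, s l)"
proof -
  have "(B * selP d k s) $$ (i,l) = (\<Sum>m<d. B $$ (i,m) * selP d k s $$ (m,l))"
    by (rule mm_sum[OF B selP_carrier i l])
  also have "\<dots> = (\<Sum>m<d. if m = s l then B $$ (i,m) else 0)"
    using l by (intro sum.cong refl) (simp add: selP_def)
  also have "\<dots> = B $$ (i, s l)" using sl by (simp add: sum.delta)
  finally show ?thesis .
qed

lemma sum_img_le:
  fixes f :: "nat \<Rightarrow> real"
  assumes inj: "inj_on \<sigma> {..<r}" and sub: "\<sigma> ` {..<r} \<subseteq> {..<d}" and nn: "\<And>m. 0 \<le> f m"
  shows "(\<Sum>l<r. f (\<sigma> l)) \<le> (\<Sum>m<d. f m)"
proof -
  have "(\<Sum>l<r. f (\<sigma> l)) = (\<Sum>m\<in>\<sigma> ` {..<r}. f m)" by (rule sum.reindex[OF inj, symmetric, unfolded comp_def])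
  also have "\<dots> \<le> (\<Sum>m<d. f m)" by (rule sum_mono2[OF _ sub]) (auto simp: nn)
  finally show ?thesis .
qed

lemma core:
  fixes A B :: "real mat"
  assumes A: "A \<in> carrier_mat n d" and B: "B \<in> carrier_mat n d"
    and rk: "vec_space.rank n A \<le> k" and k1: "1 \<le> k" and kd: "k < d"
  shows "\<exists>s. inj_on s {..<k} \<and> s ` {..<k} \<subseteq> {..<d} \<and>
     frob_sq (B - (B * selP d k s) * pinv (B * selP d k s) * B) \<le> 4 * real k * real d * frob_sq (B - A)"
proof -
  obtain r \<sigma> c where rk': "r \<le> k" and sig: "\<sigma> ` {..<r} \<subseteq> {..<d}" and inj: "inj_on \<sigma> {..<r}"
    and cb: "\<forall>j<d. \<forall>l<r. \<bar>c j l\<bar> \<le> (1::real)"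
    and rep: "\<forall>i<n. \<forall>j<d. A $$ (i,j) = (\<Sum>l<r. A $$ (i, \<sigma> l) * c j l)"
    using span_select[OF A rk] by blast
  have "card {r..<k} \<le> card ({..<d} - \<sigma> ` {..<r})"
  proof -
    have "card (\<sigma> ` {..<r}) = r" using card_image[OF inj] by simp
    hence "card ({..<d} - \<sigma> ` {..<r}) = d - r" using sig by (simp add: card_Diff_subset)
    thus ?thesis using kd by simp
  qed
  then obtain f where fim: "f ` {r..<k} \<subseteq> {..<d} - \<sigma> ` {..<r}" and finj: "inj_on f {r..<k}"
    using card_le_inj[of "{r..<k}" "{..<d} - \<sigma> ` {..<r}"] by auto
  define s where "s = (\<lambda>l. if l < r then \<sigma> l else f l)"
  have sd: "s l < d" if "l < k" for l
    using that sig fim by (cases "l < r") (auto simp: s_def image_subset_iff)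
  have sinj: "inj_on s {..<k}"
  proof (rule inj_onI)
    fix a b assume a: "a \<in> {..<k}" and b: "b \<in> {..<k}" and e: "s a = s b"
    show "a = b"
    proof (cases "a < r"; cases "b < r")
      assume "a < r" "b < r" thus ?thesis using e inj by (auto simp: s_def inj_on_def)
    next
      assume h: "a < r" "\<not> b < r"
      have "f b \<in> f ` {r..<k}" using h b by auto
      hence "f b \<notin> \<sigma> ` {..<r}" using fim by auto
      moreover have "f b = \<sigma> a" using e h by (simp add: s_def)
      ultimately show ?thesis using h by auto
    next
      assume h: "\<not> a < r" "b < r"
      have "f a \<in> f ` {r..<k}" using h a by auto
      hence "f a \<notin> \<sigma> ` {..<r}" using fim by auto
      moreover have "f a = \<sigma> b" using e h by (simp add: s_def)
      ultimately show ?thesis using h by auto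
    next
      assume "\<not> a < r" "\<not> b < r" thus ?thesis using e finj a b by (auto simp: s_def inj_on_def)
    qed
  qed
  have ssub: "s ` {..<k} \<subseteq> {..<d}" using sd by auto
  define P where "P = selP d k s"
  have P: "P \<in> carrier_mat d k" unfolding P_def by (rule selP_carrier)
  have BP: "B * P \<in> carrier_mat n k" using B P by simp
  define Y where "Y = mat k d (\<lambda>(l,j). if l < r then c j l else 0)"
  have Y: "Y \<in> carrier_mat k d" by (simp add: Y_def)
  have pb: "frob_sq (B - (B * P) * pinv (B * P) * B) \<le> frob_sq (B - (B * P) * Y)"
    by (rule proj_bound[OF BP B Y])
  define e where "e = (\<lambda>i j. B $$ (i,j) - A $$ (i,j))"
  have nB: "dim_row B = n" "dim_col B = d" using B by auto
  have nA: "dim_row A = n" "dim_col A = d" using A by auto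
  have BPY: "(B * P * Y) $$ (i,j) = (\<Sum>l<r. B $$ (i, \<sigma> l) * c j l)" if i: "i < n" and j: "j < d" for i j
  proof -
    have "(B * P * Y) $$ (i,j) = (\<Sum>l<k. (B * P) $$ (i,l) * Y $$ (l,j))" by (rule mm_sum[OF BP Y i j])
    also have "\<dots> = (\<Sum>l<k. if l < r then B $$ (i, \<sigma> l) * c j l else 0)"
      using i j sd by (intro sum.cong refl) (simp add: P_def BP_index[OF B] Y_def s_def)
    also have "\<dots> = (\<Sum>l<r. B $$ (i, \<sigma> l) * c j l)"
    proof -
      have "(\<Sum>l<k. if l < r then B $$ (i, \<sigma> l) * c j l else 0) = (\<Sum>l\<in>{..<k} \<inter> {l. l < r}. B $$ (i, \<sigma> l) * c j l)"
        by (simp add: sum.inter_restrict)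
      also have "{..<k} \<inter> {l. l < r} = {..<r}" using rk' by auto
      finally show ?thesis .
    qed
    finally show ?thesis .
  qed
  have entry: "((B - B * P * Y) $$ (i,j))\<^sup>2 \<le> 2 * (e i j)\<^sup>2 + 2 * real k * (\<Sum>m<d. (e i m)\<^sup>2)"
    if i: "i < n" and j: "j < d" for i j
  proof -
    have BPYc: "B * P * Y \<in> carrier_mat n d" using BP Y by simp
    have "(B - B * P * Y) $$ (i,j) = B $$ (i,j) - (\<Sum>l<r. B $$ (i, \<sigma> l) * c j l)"
    proof -
      have "i < dim_row (B * P * Y)" "j < dim_col (B * P * Y)" using BPYc i j by auto
      from index_minus_mat(1)[OF this, of B] BPY[OF i j] show ?thesis by simp
    qed
    also have "\<dots> = e i j - (\<Sum>l<r. e i (\<sigma> l) * c j l)"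
      using rep i j by (simp add: e_def algebra_simps sum_subtractf)
    finally have eq: "(B - B * P * Y) $$ (i,j) = e i j - (\<Sum>l<r. e i (\<sigma> l) * c j l)" .
    have "(e i j - (\<Sum>l<r. e i (\<sigma> l) * c j l))\<^sup>2 \<le> 2 * (e i j)\<^sup>2 + 2 * (\<Sum>l<r. e i (\<sigma> l) * c j l)\<^sup>2"
      by (rule sq_diff_le)
    also have "(\<Sum>l<r. e i (\<sigma> l) * c j l)\<^sup>2 \<le> real r * (\<Sum>l<r. (e i (\<sigma> l) * c j l)\<^sup>2)"
      using sq_sum_le_card[of "{..<r}"] by simp
    also have "\<dots> \<le> real k * (\<Sum>l<r. (e i (\<sigma> l))\<^sup>2)"
    proof (rule mult_mono)
      show "real r \<le> real k" using rk' by simp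
      show "(\<Sum>l<r. (e i (\<sigma> l) * c j l)\<^sup>2) \<le> (\<Sum>l<r. (e i (\<sigma> l))\<^sup>2)"
      proof (rule sum_mono)
        fix l assume l: "l \<in> {..<r}"
        have "(c j l)\<^sup>2 \<le> 1" using cb j l by (simp add: abs_square_le_1)
        hence "(e i (\<sigma> l))\<^sup>2 * (c j l)\<^sup>2 \<le> (e i (\<sigma> l))\<^sup>2 * 1" by (intro mult_left_mono) auto
        thus "(e i (\<sigma> l) * c j l)\<^sup>2 \<le> (e i (\<sigma> l))\<^sup>2" by (simp add: power_mult_distrib)
      qed
    qed (auto intro: sum_nonneg)
    also have "(\<Sum>l<r. (e i (\<sigma> l))\<^sup>2) \<le> (\<Sum>m<d. (e i m)\<^sup>2)"
      by (rule sum_img_le[OF inj sig]) simp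
    finally show ?thesis unfolding eq by (simp add: mult_left_mono)
  qed
  have fe: "frob_sq (B - A) = (\<Sum>i<n. \<Sum>j<d. (e i j)\<^sup>2)"
    unfolding frob_sq_def e_def using nA by simp
  have "frob_sq (B - B * P * Y) = (\<Sum>i<n. \<Sum>j<d. ((B - B * P * Y) $$ (i,j))\<^sup>2)"
  proof -
    have "dim_row (B * P * Y) = n" "dim_col (B * P * Y) = d" using BP Y by auto
    thus ?thesis unfolding frob_sq_def by (simp only: index_minus_mat(2,3))
  qed
  also have "\<dots> \<le> (\<Sum>i<n. \<Sum>j<d. 2 * (e i j)\<^sup>2 + 2 * real k * (\<Sum>m<d. (e i m)\<^sup>2))"
    by (intro sum_mono) (simp add: entry)
  also have "\<dots> = 2 * (\<Sum>i<n. \<Sum>j<d. (e i j)\<^sup>2) + 2 * real k * real d * (\<Sum>i<n. \<Sum>m<d. (e i m)\<^sup>2)"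
    by (simp add: sum.distrib sum_distrib_left algebra_simps)
  also have "\<dots> \<le> 4 * real k * real d * frob_sq (B - A)"
  proof -
    have f0: "0 \<le> frob_sq (B - A)" unfolding fe by (intro sum_nonneg) auto
    have "1 \<le> k * d" using k1 kd by (simp add: Suc_le_eq)
    hence "real 1 \<le> real (k * d)" by (simp only: of_nat_le_iff)
    hence "1 \<le> real k * real d" by simp
    hence "1 * frob_sq (B - A) \<le> (real k * real d) * frob_sq (B - A)" using f0
      by (rule mult_right_mono)
    hence h2: "2 * frob_sq (B - A) \<le> 2 * real k * real d * frob_sq (B - A)" by linarith
    have "4 * real k * real d * frob_sq (B - A) = 2 * real k * real d * frob_sq (B - A) + 2 * real k * real d * frob_sq (B - A)"
      by simp
    thus ?thesis unfolding fe[symmetric] using h2 by linarith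
  qed
  finally have "frob_sq (B - B * P * Y) \<le> 4 * real k * real d * frob_sq (B - A)" .
  with pb have "frob_sq (B - (B * P) * pinv (B * P) * B) \<le> 4 * real k * real d * frob_sq (B - A)" by simp
  thus ?thesis using sinj ssub unfolding P_def by blast
qed

lemma selP_restrict: "selP d k (restrict s {..<k}) = selP d k s"
  by (rule eq_matI) (auto simp: selP_def)

theorem lemma5p5:
  "\<exists>C::real. \<forall>k d n. \<forall>B::real mat.
     1 \<le> k \<longrightarrow> k < d \<longrightarrow> 1 \<le> n \<longrightarrow> B \<in> carrier_mat n d \<longrightarrow>
     (\<exists>(s::nat \<Rightarrow> nat) (P::real mat).
        inj_on s {..<k} \<and> s ` {..<k} \<subseteq> {..<d} \<and>
        P \<in> carrier_mat d k \<and> (\<forall>j<k. col P j = unit_vec d (s j)) \<and>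
        frob_sq (B - (B * P) * pinv (B * P) * B)
          \<le> C * real k * real d * best_rank_err B k)"
proof (intro exI[of _ 4] allI impI)
  fix k d n :: nat and B :: "real mat"
  assume k1: "1 \<le> k" and kd: "k < d" and n1: "1 \<le> n" and B: "B \<in> carrier_mat n d"
  have nB: "dim_row B = n" "dim_col B = d" using B by auto
  define err where "err = (\<lambda>s. frob_sq (B - (B * selP d k s) * pinv (B * selP d k s) * B))"
  define SS where "SS = {s \<in> PiE {..<k} (\<lambda>_. {..<d}). inj_on s {..<k}}"
  have "SS \<subseteq> PiE {..<k} (\<lambda>_. {..<d})" unfolding SS_def by blast
  moreover have "finite (PiE {..<k} (\<lambda>_. {..<d}))" by (intro finite_PiE) auto
  ultimately have finSS: "finite SS" by (rule finite_subset)
  have "restrict (\<lambda>l. l) {..<k} \<in> SS" unfolding SS_def using kd by (auto simp: inj_on_def)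
  hence SSne: "SS \<noteq> {}" by auto
  define m where "m = Min (err ` SS)"
  have "m \<in> err ` SS" unfolding m_def using finSS SSne by (intro Min_in) auto
  then obtain s0 where s0: "s0 \<in> SS" and ms0: "err s0 = m" by auto
  have mle: "m \<le> err s" if "s \<in> SS" for s unfolding m_def using finSS that by simp
  define \<E> where "\<E> = {frob_sq (B - A) | A. A \<in> carrier_mat (dim_row B) (dim_col B) \<and> mrank A \<le> k}"
  have ber: "best_rank_err B k = Inf \<E>" unfolding best_rank_err_def \<E>_def ..
  have "0\<^sub>m n d \<in> carrier_mat (dim_row B) (dim_col B) \<and> mrank (0\<^sub>m n d) \<le> k"
    using nB by (simp add: mrank_def vec_space.rank_0I)
  hence Ene: "\<E> \<noteq> {}" unfolding \<E>_def by blast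
  have key: "m \<le> 4 * real k * real d * best_rank_err B k"
  proof -
    let ?c = "4 * real k * real d"
    have cpos: "?c > 0" using k1 kd by simp
    show ?thesis
    proof (rule field_le_epsilon)
      fix e :: real assume e: "0 < e"
      have "Inf \<E> < Inf \<E> + e / ?c" using e cpos by simp
      then obtain x where xE: "x \<in> \<E>" and xl: "x < Inf \<E> + e / ?c" using cInf_lessD[OF Ene] by blast
      then obtain A where x: "x = frob_sq (B - A)" and A: "A \<in> carrier_mat n d" and rk: "mrank A \<le> k"
        unfolding \<E>_def using nB by auto
      have rk': "vec_space.rank n A \<le> k" using rk A unfolding mrank_def by (simp add: carrier_matD)
      obtain s where sinj: "inj_on s {..<k}" and ssub: "s ` {..<k} \<subseteq> {..<d}"
        and sb: "err s \<le> ?c * frob_sq (B - A)"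
        using core[OF A B rk' k1 kd] unfolding err_def by blast
      have "restrict s {..<k} \<in> SS" unfolding SS_def using sinj ssub
        by (auto simp: inj_on_def)
      hence "m \<le> err (restrict s {..<k})" by (rule mle)
      also have "err (restrict s {..<k}) = err s" unfolding err_def selP_restrict ..
      also have "\<dots> \<le> ?c * x" using sb x by simp
      also have "\<dots> \<le> ?c * (Inf \<E> + e / ?c)" using xl cpos by (intro mult_left_mono) auto
      also have "\<dots> = ?c * Inf \<E> + e" using k1 kd by (simp add: distrib_left)
      finally show "m \<le> ?c * best_rank_err B k + e" unfolding ber .
    qed
  qed
  have s0P: "s0 \<in> PiE {..<k} (\<lambda>_. {..<d})" and s0inj: "inj_on s0 {..<k}" using s0 unfolding SS_def by auto
  have s0sub: "s0 ` {..<k} \<subseteq> {..<d}" using s0P by (auto simp: PiE_def Pi_def)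
  have Pc: "selP d k s0 \<in> carrier_mat d k" by (rule selP_carrier)
  have cols: "\<forall>j<k. col (selP d k s0) j = unit_vec d (s0 j)"
  proof (intro allI impI)
    fix j assume j: "j < k"
    have sj: "s0 j < d" using s0sub j by auto
    show "col (selP d k s0) j = unit_vec d (s0 j)"
      by (rule eq_vecI) (use j sj in \<open>auto simp: selP_def\<close>)
  qed
  show "\<exists>s P. inj_on s {..<k} \<and> s ` {..<k} \<subseteq> {..<d} \<and> P \<in> carrier_mat d k \<and>
      (\<forall>j<k. col P j = unit_vec d (s j)) \<and>
      frob_sq (B - B * P * pinv (B * P) * B) \<le> 4 * real k * real d * best_rank_err B k"
    using s0inj s0sub Pc cols key ms0 unfolding err_def by blast
qed

end
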